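(* For every program $P$, state $s$ and natural number $n$, $$\mathrm{conv}\,F_n(P,s)=\{\mu\mid \langle P,s\rangle\Downarrow^{\mathcal S,n}\mu\ \text{for some scheduler }\mathcal S\},$$ where $\mathrm{conv}$ denotes the convex hull (set of finite convex combinations).
   Context: Fix a set $S$ of states. For a set $X$, $\mathcal V_{=1,\omega}(X)$ (resp. $\mathcal V_{\le1,\omega}(X)$) is the set of finitely supported probability (resp. subprobability) distributions on $X$, written as finite formal sums $\sum_i p_i\cdot x_i$; $\bot$ is the zero distribution and $1\cdot x=\delta_x$ the point mass; ordered, added and scaled pointwise. For each atomic program $\mathtt a$ a function $[\![\mathtt a]\!]:S\to\mathcal V_{=1,\omega}(S)$ is given, and for each condition $\mathtt b$ a function $[\![\mathtt b]\!]:S\to\{\mathtt{tt},\mathtt{ff}\}$. Programs: $P::=\mathtt{skip}\mid\mathtt a\mid P;P\mid P\parallel P\mid P+_{\mathtt p}P\mid P+P\mid\mathtt{if}\ \mathtt b\ \mathtt{then}\ P\ \mathtt{else}\ P\mid\mathtt{while}\ \mathtt b\ P$ ($\mathtt p\in[0,1]\cap\mathbb Q$). The small-step relation $\longrightarrow\subseteq(\mathrm{Pr}\times S)\times\mathcal V_{=1,\omega}(S+\mathrm{Pr}\times S)$ is the least relation closed under: $\langle\mathtt a,s\rangle\to[\![\mathtt a]\!](s)$; $\langle\mathtt{skip},s\rangle\to1\cdot s$; if $\langle P,s\rangle\to\sum_ip_i\langle P_i,s_i\rangle+\sum_jp_j s_j$ then $\langle P;Q,s\rangle\to\sum_ip_i\langle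 P_i;Q,s_i\rangle+\sum_jp_j\langle Q,s_j\rangle$ and $\langle P\parallel Q,s\rangle\to\sum_ip_i\langle P_i\parallel Q,s_i\rangle+\sum_jp_j\langle Q,s_j\rangle$; if $\langle Q,s\rangle\to\sum_ip_i\langle Q_i,s_i\rangle+\sum_jp_js_j$ then $\langle P\parallel Q,s\rangle\to\sum_ip_i\langle P\parallel Q_i,s_i\rangle+\sum_jp_j\langle P,s_j\rangle$; if $\langle P,s\rangle\to\mu$ and $\langle Q,s\rangle\to\nu$ then $\langle P+_{\mathtt p}Q,s\rangle\to\mathtt p\cdot\mu+(1-\mathtt p)\cdot\nu$; if $\langle P,s\rangle\to\mu$ or $\langle Q,s\rangle\to\mu$ then $\langle P+Q,s\rangle\to\mu$; $\langle\mathtt{if}\ \mathtt b\ \mathtt{then}\ P\ \mathtt{else}\ Q,s\rangle\to1\cdot\langle P,s\rangle$ if $[\![\mathtt b]\!](s)=\mathtt{tt}$, $\to1\cdot\langle Q,s\rangle$ otherwise; $\langle\mathtt{while}\ \mathtt b\ P,s\rangle\to1\cdot\langle P;\mathtt{while}\ \mathtt b\ P,s\rangle$ if $[\![\mathtt b]\!](s)=\mathtt{tt}$, $\to1\cdot s$ otherwise. Write $\langle P,s\rangle\!\longrightarrow=\{\mu\mid\langle P,s\rangle\to\mu\}$. Let $I=((\mathrm{Pr}\times S)\times\mathcal V_{=1,\omega}(S+\mathrm{Pr}\times S))^*\times(\mathrm{Pr}\times S)$, elements written $h\langle P,s\rangle$ ($h$ a history; juxtaposition extends histories). A scheduler is a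 partial function $\mathcal S:I\rightharpoonup\mathcal V_{=1,\omega}(S+\mathrm{Pr}\times S)$ whose value at $h\langle P,s\rangle$, when defined, is a finite convex combination of elements of $\langle P,s\rangle\!\longrightarrow$. Big-step: $h\langle P,s\rangle\Downarrow^{\mathcal S,0}\bot$; and $h\langle P,s\rangle\Downarrow^{\mathcal S,n+1}\sum_kp_k(\sum_ip_{k,i}\mu_{k,i}+\sum_jp_{k,j}s_{k,j})$ whenever $\mathcal S(h\langle P,s\rangle)=\sum_kp_k\nu_k$ with $\nu_k=\sum_ip_{k,i}\langle P_{k,i},s_{k,i}\rangle+\sum_jp_{k,j}s_{k,j}\in\langle P,s\rangle\!\longrightarrow$ and $h\langle P,s\rangle\nu_k\langle P_{k,i},s_{k,i}\rangle\Downarrow^{\mathcal S,n}\mu_{k,i}$ for all $k,i$; with empty history we write $\langle P,s\rangle\Downarrow^{\mathcal S,n}\mu$. Finite sets $F_n(P,s)\subseteq\mathcal V_{\le1,\omega}(S)$ are defined by $F_0(P,s)=\{\bot\}$ and $F_{n+1}(P,s)=\bigcup\{\sum_ip_i\cdot F_n(P_i,s_i)+\sum_jp_j\cdot\delta_{s_j}\mid\langle P,s\rangle\to\sum_ip_i\langle P_i,s_i\rangle+\sum_jp_js_j\}$, with Minkowski sums and scalings of sets. *)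

theory Defs
  imports Complex_Main
begin

(* Finitely supported (sub)probability distributions on a set X are represented
   as functions X => real; "\<bottom>" is the constant 0 function. *)

type_synonym 'x dist = "'x \<Rightarrow> real"

definition supp :: "'x dist \<Rightarrow> 'x set" where
  "supp d = {x. d x \<noteq> 0}"

(* V_{=1,omega}(X) *)
definition is_dist :: "'x dist \<Rightarrow> bool" where
  "is_dist d \<longleftrightarrow> (\<forall>x. 0 \<le> d x) \<and> finite (supp d) \<and> sum d (supp d) = 1"

(* V_{<=1,omega}(X) *)
definition is_subdist :: "'x dist \<Rightarrow> bool" where
  "is_subdist d \<longleftrightarrow> (\<forall>x. 0 \<le> d x) \<and> finite (supp d) \<and> sum d (supp d) \<le> 1"

definition zero_dist :: "'x dist" where
  "zero_dist = (\<lambda>_. 0)"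

definition point :: "'x \<Rightarrow> 'x dist" where
  "point x = (\<lambda>y. if y = x then 1 else 0)"

(* pushforward of a finitely supported distribution (formal sums add up) *)
definition push :: "('x \<Rightarrow> 'y) \<Rightarrow> 'x dist \<Rightarrow> 'y dist" where
  "push f d = (\<lambda>y. sum d {x \<in> supp d. f x = y})"

(* conv A: the set of finite convex combinations of elements of A *)
definition conv :: "'x dist set \<Rightarrow> 'x dist set" where
  "conv A = {\<mu>. \<exists>(m::nat) (p::nat \<Rightarrow> real) (x::nat \<Rightarrow> 'x dist).
      (\<forall>i<m. 0 \<le> p i \<and> x i \<in> A) \<and> sum p {..<m} = 1 \<and>
      \<mu> = (\<lambda>t. \<Sum>i<m. p i * x i t)}"

(* Programs; 'a = atomic programs, 'b = conditions *)
datatype ('a, 'b) prog =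
    Skip
  | Atom 'a
  | Seq "('a, 'b) prog" "('a, 'b) prog"
  | Par "('a, 'b) prog" "('a, 'b) prog"
  | PChoice "('a, 'b) prog" rat "('a, 'b) prog"   (* P +_p Q *)
  | NChoice "('a, 'b) prog" "('a, 'b) prog"       (* P + Q *)
  | If 'b "('a, 'b) prog" "('a, 'b) prog"
  | While 'b "('a, 'b) prog"

(* probabilities p in [0,1] \<inter> Q *)
fun wf_prog :: "('a, 'b) prog \<Rightarrow> bool" where
  "wf_prog Skip = True"
| "wf_prog (Atom a) = True"
| "wf_prog (Seq P Q) = (wf_prog P \<and> wf_prog Q)"
| "wf_prog (Par P Q) = (wf_prog P \<and> wf_prog Q)"
| "wf_prog (PChoice P p Q) = (0 \<le> p \<and> p \<le> 1 \<and> wf_prog P \<and> wf_prog Q)"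
| "wf_prog (NChoice P Q) = (wf_prog P \<and> wf_prog Q)"
| "wf_prog (If b P Q) = (wf_prog P \<and> wf_prog Q)"
| "wf_prog (While b P) = wf_prog P"

type_synonym ('a, 'b, 's) conf = "('a, 'b) prog \<times> 's"
type_synonym ('a, 'b, 's) res = "('s + ('a, 'b) prog \<times> 's) dist"

definition embed_state :: "'s dist \<Rightarrow> ('a, 'b, 's) res" where
  "embed_state d = (\<lambda>x. case x of Inl t \<Rightarrow> d t | Inr _ \<Rightarrow> 0)"

(* continuation maps used by the rules for ; and || *)
fun seq_map :: "('a, 'b) prog \<Rightarrow> 's + ('a, 'b) prog \<times> 's \<Rightarrow> 's + ('a, 'b) prog \<times> 's" where
  "seq_map Q (Inr (P', s')) = Inr (Seq P' Q, s')"
| "seq_map Q (Inl s') = Inr (Q, s')"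

fun parL_map :: "('a, 'b) prog \<Rightarrow> 's + ('a, 'b) prog \<times> 's \<Rightarrow> 's + ('a, 'b) prog \<times> 's" where
  "parL_map Q (Inr (P', s')) = Inr (Par P' Q, s')"
| "parL_map Q (Inl s') = Inr (Q, s')"

fun parR_map :: "('a, 'b) prog \<Rightarrow> 's + ('a, 'b) prog \<times> 's \<Rightarrow> 's + ('a, 'b) prog \<times> 's" where
  "parR_map P (Inr (Q', s')) = Inr (Par P Q', s')"
| "parR_map P (Inl s') = Inr (P, s')"

(* small-step relation, parametrised by [[a]] and [[b]] *)
inductive step :: "('a \<Rightarrow> 's \<Rightarrow> 's dist) \<Rightarrow> ('b \<Rightarrow> 's \<Rightarrow> bool)
    \<Rightarrow> ('a, 'b, 's) conf \<Rightarrow> ('a, 'b, 's) res \<Rightarrow> bool"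
  for sa :: "'a \<Rightarrow> 's \<Rightarrow> 's dist" and sb :: "'b \<Rightarrow> 's \<Rightarrow> bool" where
  atom: "step sa sb (Atom a, s) (embed_state (sa a s))"
| skip: "step sa sb (Skip, s) (point (Inl s))"
| seq: "step sa sb (P, s) \<nu> \<Longrightarrow> step sa sb (Seq P Q, s) (push (seq_map Q) \<nu>)"
| parL: "step sa sb (P, s) \<nu> \<Longrightarrow> step sa sb (Par P Q, s) (push (parL_map Q) \<nu>)"
| parR: "step sa sb (Q, s) \<nu> \<Longrightarrow> step sa sb (Par P Q, s) (push (parR_map P) \<nu>)"
| pchoice: "step sa sb (P, s) \<mu> \<Longrightarrow> step sa sb (Q, s) \<nu> \<Longrightarrow>
     step sa sb (PChoice P p Q, s) (\<lambda>x. real_of_rat p * \<mu> x + (1 - real_of_rat p) * \<nu> x)"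
| nchoiceL: "step sa sb (P, s) \<mu> \<Longrightarrow> step sa sb (NChoice P Q, s) \<mu>"
| nchoiceR: "step sa sb (Q, s) \<mu> \<Longrightarrow> step sa sb (NChoice P Q, s) \<mu>"
| if_tt: "sb b s \<Longrightarrow> step sa sb (If b P Q, s) (point (Inr (P, s)))"
| if_ff: "\<not> sb b s \<Longrightarrow> step sa sb (If b P Q, s) (point (Inr (Q, s)))"
| while_tt: "sb b s \<Longrightarrow> step sa sb (While b P, s) (point (Inr (Seq P (While b P), s)))"
| while_ff: "\<not> sb b s \<Longrightarrow> step sa sb (While b P, s) (point (Inl s))"

(* F_n(P,s); formal sums are read canonically (over the support of nu) *)
fun Fn :: "('a \<Rightarrow> 's \<Rightarrow> 's dist) \<Rightarrow> ('b \<Rightarrow> 's \<Rightarrow> bool) \<Rightarrow> nat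
    \<Rightarrow> ('a, 'b, 's) conf \<Rightarrow> 's dist set" where
  "Fn sa sb 0 c = {zero_dist}"
| "Fn sa sb (Suc n) c =
     {\<mu>. \<exists>\<nu> f. step sa sb c \<nu> \<and>
          (\<forall>c'. \<nu> (Inr c') \<noteq> 0 \<longrightarrow> f c' \<in> Fn sa sb n c') \<and>
          \<mu> = (\<lambda>t. (\<Sum>c'\<in>{c'. \<nu> (Inr c') \<noteq> 0}. \<nu> (Inr c') * f c' t) + \<nu> (Inl t))}"

(* histories and schedulers *)
type_synonym ('a, 'b, 's) hist = "(('a, 'b, 's) conf \<times> ('a, 'b, 's) res) list"
type_synonym ('a, 'b, 's) sched = "('a, 'b, 's) hist \<times> ('a, 'b, 's) conf \<Rightarrow> ('a, 'b, 's) res option"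

definition scheduler :: "('a \<Rightarrow> 's \<Rightarrow> 's dist) \<Rightarrow> ('b \<Rightarrow> 's \<Rightarrow> bool) \<Rightarrow> ('a, 'b, 's) sched \<Rightarrow> bool" where
  "scheduler sa sb Sch \<longleftrightarrow>
     (\<forall>h c d. Sch (h, c) = Some d \<longrightarrow> d \<in> conv {\<nu>. step sa sb c \<nu>})"

(* big-step semantics  h<P,s> \<Down>^{S,n} mu *)
inductive bigstep :: "('a \<Rightarrow> 's \<Rightarrow> 's dist) \<Rightarrow> ('b \<Rightarrow> 's \<Rightarrow> bool) \<Rightarrow> ('a, 'b, 's) sched
    \<Rightarrow> ('a, 'b, 's) hist \<times> ('a, 'b, 's) conf \<Rightarrow> nat \<Rightarrow> 's dist \<Rightarrow> bool"
  for sa :: "'a \<Rightarrow> 's \<Rightarrow> 's dist" and sb :: "'b \<Rightarrow> 's \<Rightarrow> bool"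
  and Sch :: "('a, 'b, 's) sched" where
  zero: "bigstep sa sb Sch (h, c) 0 zero_dist"
| suc: "\<lbrakk> Sch (h, c) = Some (\<lambda>x. \<Sum>k<(m::nat). (p::nat \<Rightarrow> real) k * \<nu> k x);
         \<forall>k<m. 0 \<le> p k; sum p {..<m} = 1;
         \<forall>k<m. step sa sb c (\<nu> k);
         \<forall>k<m. \<forall>c'. \<nu> k (Inr c') \<noteq> 0 \<longrightarrow>
             bigstep sa sb Sch (h @ [(c, \<nu> k)], c') n (\<mu>s k c');
         \<mu> = (\<lambda>t. \<Sum>k<m. p k *
                 ((\<Sum>c'\<in>{c'. \<nu> k (Inr c') \<noteq> 0}. \<nu> k (Inr c') * \<mu>s k c' t) + \<nu> k (Inl t))) \<rbrakk>
       \<Longrightarrow> bigstep sa sb Sch (h, c) (Suc n) \<mu>"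

end

theory Submission
  imports Defs "HOL-Library.Function_Algebras" "HOL-Analysis.Convex"
begin

instantiation "fun" :: (type, real_vector) real_vector
begin
definition scaleR_fun :: "real \<Rightarrow> ('a \<Rightarrow> 'b) \<Rightarrow> 'a \<Rightarrow> 'b" where
  "scaleR_fun r f = (\<lambda>x. r *\<^sub>R f x)"
instance
  by standard (auto simp: scaleR_fun_def fun_eq_iff algebra_simps)
end


lemma sum_fun_apply: "(\<Sum>i\<in>I. f i) t = (\<Sum>i\<in>I. f i t)"
  by (induction I rule: infinite_finite_induct) auto

lemma scaleR_fun_apply: "(r *\<^sub>R f) t = r *\<^sub>R f t"
  by (simp add: scaleR_fun_def)

lemma conv_eq: "conv (A::'x dist set) = convex hull A"
proof (intro subset_antisym subsetI)
  fix \<mu> assume "\<mu> \<in> conv A"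
  then obtain m and p :: "nat \<Rightarrow> real" and x where h: "\<forall>i<m. 0 \<le> p i \<and> x i \<in> A" "sum p {..<m} = 1"
    "\<mu> = (\<lambda>t. \<Sum>i<m. p i * x i t)" unfolding conv_def by blast
  have "\<mu> = (\<Sum>i<m. p i *\<^sub>R x i)"
    using h(3) by (simp add: fun_eq_iff sum_fun_apply scaleR_fun_apply)
  also have "\<dots> \<in> convex hull A"
    by (rule convex_sum) (use h in \<open>auto intro: hull_inc\<close>)
  finally show "\<mu> \<in> convex hull A" .
next
  fix \<mu> assume "\<mu> \<in> convex hull A"
  then obtain k u x where h: "\<forall>i\<in>{1::nat..k}. 0 \<le> u i \<and> x i \<in> A" "sum u {1..k} = 1"
    "(\<Sum>i = 1..k. u i *\<^sub>R x i) = \<mu>" unfolding convex_hull_indexed by blast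
  have e: "{1..k} = Suc ` {..<k}"
    by (simp add: image_Suc_lessThan)
  have "sum u {1..k} = (\<Sum>i<k. u (Suc i))" unfolding e by (simp add: sum.reindex)
  moreover have "\<mu> = (\<lambda>t. \<Sum>i<k. u (Suc i) * x (Suc i) t)"
    using h(3)[symmetric] unfolding e by (simp add: sum.reindex fun_eq_iff sum_fun_apply scaleR_fun_apply)
  ultimately show "\<mu> \<in> conv A" using h(1,2) unfolding conv_def e
    by (intro CollectI exI[of _ k] exI[of _ "\<lambda>i. u (Suc i)"] exI[of _ "\<lambda>i. x (Suc i)"]) auto
qed

definition comb :: "('a, 'b, 's) res \<Rightarrow> (('a, 'b, 's) conf \<Rightarrow> 's dist) \<Rightarrow> 's dist" where
  "comb \<nu> g = (\<lambda>t. (\<Sum>c'\<in>{c'. \<nu> (Inr c') \<noteq> 0}. \<nu> (Inr c') * g c' t) + \<nu> (Inl t))"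

definition SSt :: "('a, 'b, 's) res \<Rightarrow> (('a, 'b, 's) conf \<Rightarrow> 's dist set) \<Rightarrow> 's dist set" where
  "SSt \<nu> K = {comb \<nu> g | g. \<forall>c'. \<nu> (Inr c') \<noteq> 0 \<longrightarrow> g c' \<in> K c'}"

lemma Fn_Suc_eq: "Fn sa sb (Suc n) c = \<Union> {SSt \<nu> (Fn sa sb n) | \<nu>. step sa sb c \<nu>}"
  unfolding SSt_def comb_def by auto

lemma comb_lin:
  assumes "u + v = 1"
  shows "u *\<^sub>R comb \<nu> g1 + v *\<^sub>R comb \<nu> g2 = comb \<nu> (\<lambda>c'. u *\<^sub>R g1 c' + v *\<^sub>R g2 c')"
proof -
  have "u * x + v * x = x" for x :: real using assms by (metis distrib_right mult_1)
  note h = this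
  show ?thesis
    apply (simp add: comb_def fun_eq_iff scaleR_fun_apply sum_distrib_left sum.distrib
        algebra_simps flip: sum_fun_apply)
    using h by simp
qed

lemma SSt_convex:
  assumes "\<And>c'. convex (K c')"
  shows "convex (SSt \<nu> K)"
proof (rule convexI)
  fix x y and u v :: real
  assume x: "x \<in> SSt \<nu> K" and y: "y \<in> SSt \<nu> K" and uv: "0 \<le> u" "0 \<le> v" "u + v = 1"
  from x obtain g1 where g1: "x = comb \<nu> g1" "\<forall>c'. \<nu> (Inr c') \<noteq> 0 \<longrightarrow> g1 c' \<in> K c'"
    unfolding SSt_def by blast
  from y obtain g2 where g2: "y = comb \<nu> g2" "\<forall>c'. \<nu> (Inr c') \<noteq> 0 \<longrightarrow> g2 c' \<in> K c'"
    unfolding SSt_def by blast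
  have "u *\<^sub>R x + v *\<^sub>R y = comb \<nu> (\<lambda>c'. u *\<^sub>R g1 c' + v *\<^sub>R g2 c')"
    using comb_lin[OF uv(3)] g1 g2 by simp
  moreover have "\<forall>c'. \<nu> (Inr c') \<noteq> 0 \<longrightarrow> u *\<^sub>R g1 c' + v *\<^sub>R g2 c' \<in> K c'"
    using g1 g2 uv assms by (auto intro: convexD)
  ultimately show "u *\<^sub>R x + v *\<^sub>R y \<in> SSt \<nu> K" unfolding SSt_def by blast
qed

lemma SSt_mono: "(\<And>c'. K c' \<subseteq> L c') \<Longrightarrow> SSt \<nu> K \<subseteq> SSt \<nu> L"
  unfolding SSt_def by blast

lemma hull_SSt: "convex hull (SSt \<nu> A) \<subseteq> SSt \<nu> (\<lambda>c'. convex hull (A c'))"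
  by (rule hull_minimal) (auto intro!: SSt_convex SSt_mono hull_subset)


lemma SSt_hull:
  assumes ne: "\<And>c'. A c' \<noteq> {}"
  shows "SSt \<nu> (\<lambda>c'. convex hull (A c')) \<subseteq> convex hull (SSt \<nu> A)"
proof
  fix x assume "x \<in> SSt \<nu> (\<lambda>c'. convex hull (A c'))"
  then obtain g where g: "x = comb \<nu> g" "\<forall>c'. \<nu> (Inr c') \<noteq> 0 \<longrightarrow> g c' \<in> convex hull (A c')"
    unfolding SSt_def by blast
  define C where "C = {c'. \<nu> (Inr c') \<noteq> 0}"
  show "x \<in> convex hull (SSt \<nu> A)"
  proof (cases "finite C")
    case False
    define g0 where "g0 c' = (SOME a. a \<in> A c')" for c'
    have "g0 c' \<in> A c'" for c' unfolding g0_def using ne[of c'] by (metis ex_in_conv someI_ex)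
    then have g0: "comb \<nu> g0 \<in> SSt \<nu> A" unfolding SSt_def by blast
    have z: "(\<Sum>c'\<in>{c'. \<nu> (Inr c') \<noteq> 0}. f c') = 0" for f :: "_ \<Rightarrow> real"
      using False unfolding C_def by (rule sum.infinite)
    have "comb \<nu> g0 = comb \<nu> g" by (simp only: comb_def z)
    then have "x \<in> SSt \<nu> A" using g0 g(1) by (simp only:)
    then show ?thesis by (rule hull_inc)
  next
    case True
    have ind: "\<forall>g. (\<forall>c'\<in>C. g c' \<in> (if c' \<in> D then convex hull (A c') else A c')) \<longrightarrow>
              comb \<nu> g \<in> convex hull (SSt \<nu> A)" if "finite D" for D
      using that
    proof (induction D rule: finite_induct)
      case empty
      show ?case
      proof (intro allI impI)
        fix g assume "\<forall>c'\<in>C. g c' \<in> (if c' \<in> {} then convex hull A c' else A c')"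
        then have "\<forall>c'. \<nu> (Inr c') \<noteq> 0 \<longrightarrow> g c' \<in> A c'" unfolding C_def by simp
        then have "comb \<nu> g \<in> SSt \<nu> A" unfolding SSt_def by blast
        then show "comb \<nu> g \<in> convex hull (SSt \<nu> A)" by (rule hull_inc)
      qed
    next
      case (insert d D)
      show ?case
      proof (intro allI impI)
        fix g assume gh: "\<forall>c'\<in>C. g c' \<in> (if c' \<in> insert d D then convex hull A c' else A c')"
        show "comb \<nu> g \<in> convex hull (SSt \<nu> A)"
        proof (cases "d \<in> C")
          case False
          have "\<forall>c'\<in>C. g c' \<in> (if c' \<in> D then convex hull A c' else A c')"
          proof
            fix c' assume "c' \<in> C"
            then have "c' \<noteq> d" using False by blast
            with bspec[OF gh \<open>c' \<in> C\<close>] show "g c' \<in> (if c' \<in> D then convex hull A c' else A c')" by simp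
          qed
          then show ?thesis using insert.IH by blast
        next
          case True
          define T where "T = {y. comb \<nu> (g(d := y)) \<in> convex hull (SSt \<nu> A)}"
          have "convex T"
          proof (rule convexI)
            fix y z and u v :: real
            assume yz: "y \<in> T" "z \<in> T" and uv: "0 \<le> u" "0 \<le> v" "u + v = 1"
            have w: "u *\<^sub>R w + v *\<^sub>R w = w" for w :: "'s dist"
              using uv(3) by (metis scaleR_add_left scaleR_one)
            have e: "(\<lambda>c'. u *\<^sub>R (g(d := y)) c' + v *\<^sub>R (g(d := z)) c') = g(d := u *\<^sub>R y + v *\<^sub>R z)"
            proof (rule ext)
              fix c' show "u *\<^sub>R (g(d := y)) c' + v *\<^sub>R (g(d := z)) c' = (g(d := u *\<^sub>R y + v *\<^sub>R z)) c'"
                by (cases "c' = d") (simp_all add: w)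
            qed
            have "u *\<^sub>R comb \<nu> (g(d := y)) + v *\<^sub>R comb \<nu> (g(d := z)) \<in> convex hull (SSt \<nu> A)"
              using yz uv by (intro convexD[OF convex_convex_hull]) (auto simp: T_def)
            then show "u *\<^sub>R y + v *\<^sub>R z \<in> T"
              unfolding T_def mem_Collect_eq comb_lin[OF uv(3)] e by assumption
          qed
          moreover have "A d \<subseteq> T"
          proof
            fix a assume "a \<in> A d"
            have "\<forall>c'\<in>C. (g(d := a)) c' \<in> (if c' \<in> D then convex hull A c' else A c')"
            proof
              fix c' assume c': "c' \<in> C"
              show "(g(d := a)) c' \<in> (if c' \<in> D then convex hull A c' else A c')"
              proof (cases "c' = d")
                case True
                then show ?thesis using \<open>a \<in> A d\<close> insert.hyps(2) by simp
              next
                case False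
                then show ?thesis using bspec[OF gh c'] by simp
              qed
            qed
            then show "a \<in> T" unfolding T_def using insert.IH by blast
          qed
          ultimately have "convex hull A d \<subseteq> T" by (rule hull_minimal[rotated])
          moreover have "g d \<in> (if d \<in> insert d D then convex hull A d else A d)"
            using bspec[OF gh True] .
          ultimately have "g d \<in> T" by (simp add: subset_iff)
          then show ?thesis unfolding T_def by simp
        qed
      qed
    qed
    have "\<forall>c'\<in>C. g c' \<in> (if c' \<in> C then convex hull (A c') else A c')"
      using g(2) unfolding C_def by auto
    with ind[OF True] show ?thesis unfolding g(1) by blast
  qed
qed


lemma step_ex: "\<exists>\<nu>. step sa sb (P, s) \<nu>"
proof (induction P arbitrary: s)
  case Skip then show ?case by (blast intro: step.skip)
next
  case (Atom a) then show ?case by (blast intro: step.atom)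
next
  case (Seq P Q) then show ?case by (blast intro: step.seq)
next
  case (Par P Q) then show ?case by (blast intro: step.parL)
next
  case (PChoice P p Q) then show ?case by (blast intro: step.pchoice)
next
  case (NChoice P Q) then show ?case by (blast intro: step.nchoiceL)
next
  case (If b P Q) then show ?case by (cases "sb b s") (blast intro: step.if_tt step.if_ff)+
next
  case (While b P) then show ?case by (cases "sb b s") (blast intro: step.while_tt step.while_ff)+
qed

lemma SSt_sub_Fn: "step sa sb c \<nu> \<Longrightarrow> SSt \<nu> (Fn sa sb n) \<subseteq> Fn sa sb (Suc n) c"
  unfolding Fn_Suc_eq by blast

lemma Fn_ne: "Fn sa sb n c \<noteq> {}"
proof (induction n arbitrary: c)
  case 0 then show ?case by simp
next
  case (Suc n)
  obtain P s where c: "c = (P, s)" by (cases c)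
  obtain \<nu> where \<nu>: "step sa sb c \<nu>" using step_ex[of sa sb P s] unfolding c by blast
  define f where "f c' = (SOME x. x \<in> Fn sa sb n c')" for c'
  have "f c' \<in> Fn sa sb n c'" for c' unfolding f_def using Suc[of c'] by (metis ex_in_conv someI_ex)
  then have "comb \<nu> f \<in> SSt \<nu> (Fn sa sb n)" unfolding SSt_def by blast
  then show ?case using SSt_sub_Fn[OF \<nu>] by blast
qed

lemma bigstep_conv:
  "bigstep sa sb Sch hc n \<mu> \<Longrightarrow> \<mu> \<in> convex hull (Fn sa sb n (snd hc))"
proof (induction rule: bigstep.induct)
  case (zero h c)
  then show ?case by simp
next
  case (suc h c p \<nu> m n \<mu>s \<mu>)
  have y: "comb (\<nu> k) (\<mu>s k) \<in> convex hull (Fn sa sb (Suc n) c)" if k: "k < m" for k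
  proof -
    have "comb (\<nu> k) (\<mu>s k) \<in> SSt (\<nu> k) (\<lambda>c'. convex hull (Fn sa sb n c'))"
      unfolding SSt_def using suc.IH k by auto
    also have "\<dots> \<subseteq> convex hull (SSt (\<nu> k) (Fn sa sb n))"
      by (rule SSt_hull) (rule Fn_ne)
    also have "\<dots> \<subseteq> convex hull (Fn sa sb (Suc n) c)"
      by (rule hull_mono, rule SSt_sub_Fn) (use suc.hyps k in blast)
    finally show ?thesis .
  qed
  have "\<mu> = (\<Sum>k<m. p k *\<^sub>R comb (\<nu> k) (\<mu>s k))"
    using suc.hyps by (simp add: fun_eq_iff sum_fun_apply scaleR_fun_apply comb_def)
  also have "\<dots> \<in> convex hull (Fn sa sb (Suc n) c)"
    by (rule convex_sum) (use suc.hyps y in auto)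
  finally show ?case by simp
qed


lemma bigstep_local:
  "bigstep sa sb Sch hc n \<mu> \<Longrightarrow>
   (\<forall>rest c''. (if rest = [] then c'' = snd hc else fst (hd rest) = snd hc) \<longrightarrow>
       Sch' (fst hc @ rest, c'') = Sch (fst hc @ rest, c'')) \<Longrightarrow>
   bigstep sa sb Sch' hc n \<mu>"
proof (induction rule: bigstep.induct)
  case (zero h c)
  show ?case by (rule bigstep.zero)
next
  case (suc h c p \<nu> m n \<mu>s \<mu>)
  have e0: "Sch' (h, c) = Sch (h, c)" using suc.prems[rule_format, of "[]" c] by simp
  have ch: "\<forall>k<m. \<forall>c'. \<nu> k (Inr c') \<noteq> 0 \<longrightarrow> bigstep sa sb Sch' (h @ [(c, \<nu> k)], c') n (\<mu>s k c')"
  proof (intro allI impI)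
    fix k c' assume k: "k < m" and nz: "\<nu> k (Inr c') \<noteq> 0"
    have ag: "\<forall>rest c''. (if rest = [] then c'' = snd (h @ [(c, \<nu> k)], c') else fst (hd rest) = snd (h @ [(c, \<nu> k)], c')) \<longrightarrow>
       Sch' (fst (h @ [(c, \<nu> k)], c') @ rest, c'') = Sch (fst (h @ [(c, \<nu> k)], c') @ rest, c'')"
      unfolding fst_conv snd_conv
    proof (intro allI impI)
      fix rest c''
      show "Sch' ((h @ [(c, \<nu> k)]) @ rest, c'') = Sch ((h @ [(c, \<nu> k)]) @ rest, c'')"
        using suc.prems[rule_format, of "(c, \<nu> k) # rest" c''] by simp
    qed
    have "(\<forall>rest c''. (if rest = [] then c'' = snd (h @ [(c, \<nu> k)], c') else fst (hd rest) = snd (h @ [(c, \<nu> k)], c')) \<longrightarrow>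
       Sch' (fst (h @ [(c, \<nu> k)], c') @ rest, c'') = Sch (fst (h @ [(c, \<nu> k)], c') @ rest, c'')) \<longrightarrow>
       bigstep sa sb Sch' (h @ [(c, \<nu> k)], c') n (\<mu>s k c')"
      using suc.IH k nz by blast
    then show "bigstep sa sb Sch' (h @ [(c, \<nu> k)], c') n (\<mu>s k c')"
      using ag by (rule mp)
  qed
  show ?case
    by (rule bigstep.suc[where p=p and \<nu>=\<nu> and m=m and \<mu>s=\<mu>s]) (use suc.hyps e0 ch in auto)
qed

lemma group:
  fixes f :: "'x::real_vector \<Rightarrow> 'i" and S :: "'x set"
  assumes S: "finite S" and u: "\<forall>x\<in>S. 0 \<le> u x" "sum u S = 1" and B: "\<forall>x\<in>S. x \<in> B (f x)"
  shows "\<exists>V P y. finite V \<and> V \<subseteq> f ` S \<and> (\<forall>v\<in>V. 0 < P v \<and> y v \<in> convex hull (B v)) \<and>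
           sum P V = 1 \<and> (\<Sum>x\<in>S. u x *\<^sub>R x) = (\<Sum>v\<in>V. P v *\<^sub>R y v)"
proof -
  define S' where "S' = {x\<in>S. u x \<noteq> 0}"
  define V where "V = f ` S'"
  define P where "P v = sum u {x\<in>S'. f x = v}" for v
  define y where "y v = (\<Sum>x\<in>{x\<in>S'. f x = v}. (u x / P v) *\<^sub>R x)" for v
  have fS': "finite S'" using S unfolding S'_def by simp
  have P0: "0 < P v" if vV: "v \<in> V" for v
  proof -
    obtain x where x: "x \<in> S'" "f x = v" using vV unfolding V_def by blast
    have ux: "0 < u x" using x u unfolding S'_def by force
    show ?thesis unfolding P_def
      by (rule sum_pos2[where i=x]) (use S fS' x u ux in \<open>auto simp: S'_def\<close>)
  qed
  have yh: "y v \<in> convex hull (B v)" if vV: "v \<in> V" for v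
    unfolding y_def
  proof (rule convex_sum)
    show "finite {x \<in> S'. f x = v}" using fS' by simp
    show "(\<Sum>i\<in>{x \<in> S'. f x = v}. u i / P v) = 1"
      using P0[OF vV] by (simp add: P_def flip: sum_divide_distrib)
    show "0 \<le> u i / P v" if iS: "i \<in> {x \<in> S'. f x = v}" for i
      using iS P0[OF vV] u unfolding S'_def by auto
    show "i \<in> convex hull B v" if iS: "i \<in> {x \<in> S'. f x = v}" for i
      using iS B unfolding S'_def by (auto intro: hull_inc)
  qed simp
  have sS: "sum g S = sum g S'" if "\<And>x. u x = 0 \<Longrightarrow> g x = 0" for g :: "'x \<Rightarrow> 'z::comm_monoid_add"
    by (rule sum.mono_neutral_right) (use S that in \<open>auto simp: S'_def\<close>)
  have "sum P V = 1"
    using u(2) sS[of u] sum.image_gen[OF fS', of u f] unfolding P_def V_def by simp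
  moreover have "(\<Sum>x\<in>S. u x *\<^sub>R x) = (\<Sum>v\<in>V. P v *\<^sub>R y v)"
  proof -
    have "(\<Sum>x\<in>S. u x *\<^sub>R x) = (\<Sum>x\<in>S'. u x *\<^sub>R x)" by (rule sS) simp
    also have "\<dots> = (\<Sum>v\<in>V. \<Sum>x\<in>{x\<in>S'. f x = v}. u x *\<^sub>R x)"
      unfolding V_def by (rule sum.image_gen[OF fS'])
    also have "\<dots> = (\<Sum>v\<in>V. P v *\<^sub>R y v)"
    proof (rule sum.cong[OF refl])
      fix v assume "v \<in> V"
      then have "P v \<noteq> 0" using P0 by force
      then show "(\<Sum>x\<in>{x\<in>S'. f x = v}. u x *\<^sub>R x) = P v *\<^sub>R y v"
        unfolding y_def scaleR_sum_right by (simp add: scaleR_scaleR)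
    qed
    finally show ?thesis .
  qed
  moreover have "finite V" "V \<subseteq> f ` S" using fS' unfolding V_def S'_def by auto
  ultimately show ?thesis using P0 yh by blast
qed


lemma sched_None: "scheduler sa sb (\<lambda>_. None)"
  by (simp add: scheduler_def)

lemma forward:
  "\<mu> \<in> convex hull (Fn sa sb n c) \<Longrightarrow> \<exists>Sch. scheduler sa sb Sch \<and> bigstep sa sb Sch (h, c) n \<mu>"
proof (induction n arbitrary: h c \<mu>)
  case 0
  then have "\<mu> = zero_dist" by simp
  then show ?case using sched_None[of sa sb] bigstep.zero[of sa sb "\<lambda>_. None" h c] by blast
next
  case (Suc n)
  from Suc.prems obtain S u where S: "finite S" "S \<subseteq> \<Union> {SSt \<nu> (Fn sa sb n) | \<nu>. step sa sb c \<nu>}"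
    and u: "\<forall>x\<in>S. 0 \<le> u x" "sum u S = 1" and mu: "(\<Sum>x\<in>S. u x *\<^sub>R x) = \<mu>"
    unfolding Fn_Suc_eq convex_hull_explicit by blast
  define f where "f x = (SOME \<nu>. step sa sb c \<nu> \<and> x \<in> SSt \<nu> (Fn sa sb n))" for x
  have f: "step sa sb c (f x) \<and> x \<in> SSt (f x) (Fn sa sb n)" if xS: "x \<in> S" for x
  proof -
    have "\<exists>\<nu>. step sa sb c \<nu> \<and> x \<in> SSt \<nu> (Fn sa sb n)" using S(2) xS by blast
    then show ?thesis unfolding f_def by (rule someI_ex)
  qed
  obtain V P y where V: "finite V" "V \<subseteq> f ` S"
    and Py: "\<forall>v\<in>V. 0 < P v \<and> y v \<in> convex hull (SSt v (Fn sa sb n))"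
    and P1: "sum P V = 1" and mu2: "(\<Sum>x\<in>S. u x *\<^sub>R x) = (\<Sum>v\<in>V. P v *\<^sub>R y v)"
    using group[OF S(1) u(1) u(2), where f=f and B="\<lambda>\<nu>. SSt \<nu> (Fn sa sb n)"] f by blast
  have Vstep: "\<forall>v\<in>V. step sa sb c v" using V(2) f by blast
  have "\<forall>v\<in>V. \<exists>g. y v = comb v g \<and> (\<forall>c'. v (Inr c') \<noteq> 0 \<longrightarrow> g c' \<in> convex hull (Fn sa sb n c'))"
  proof
    fix v assume "v \<in> V"
    then have "y v \<in> SSt v (\<lambda>c'. convex hull (Fn sa sb n c'))" using Py hull_SSt by blast
    then show "\<exists>g. y v = comb v g \<and> (\<forall>c'. v (Inr c') \<noteq> 0 \<longrightarrow> g c' \<in> convex hull (Fn sa sb n c'))"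
      unfolding SSt_def by blast
  qed
  then obtain G where G: "\<forall>v\<in>V. y v = comb v (G v) \<and>
      (\<forall>c'. v (Inr c') \<noteq> 0 \<longrightarrow> G v c' \<in> convex hull (Fn sa sb n c'))" by metis
  have "\<forall>vc. \<exists>Sch. scheduler sa sb Sch \<and> (fst vc \<in> V \<and> fst vc (Inr (snd vc)) \<noteq> 0 \<longrightarrow>
          bigstep sa sb Sch (h @ [(c, fst vc)], snd vc) n (G (fst vc) (snd vc)))"
  proof
    fix vc
    show "\<exists>Sch. scheduler sa sb Sch \<and> (fst vc \<in> V \<and> fst vc (Inr (snd vc)) \<noteq> 0 \<longrightarrow>
          bigstep sa sb Sch (h @ [(c, fst vc)], snd vc) n (G (fst vc) (snd vc)))"
    proof (cases "fst vc \<in> V \<and> fst vc (Inr (snd vc)) \<noteq> 0")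
      case True
      then have "G (fst vc) (snd vc) \<in> convex hull (Fn sa sb n (snd vc))" using G by blast
      from Suc.IH[OF this, of "h @ [(c, fst vc)]"] show ?thesis by blast
    next
      case False
      then show ?thesis using sched_None by blast
    qed
  qed
  then obtain F where F: "\<forall>vc. scheduler sa sb (F vc) \<and> (fst vc \<in> V \<and> fst vc (Inr (snd vc)) \<noteq> 0 \<longrightarrow>
          bigstep sa sb (F vc) (h @ [(c, fst vc)], snd vc) n (G (fst vc) (snd vc)))" by metis
  define Sch0 where "Sch0 = (\<lambda>(h', c''). if h' = h \<and> c'' = c then Some (\<Sum>v\<in>V. P v *\<^sub>R v)
      else if length h < length h' \<and> take (length h) h' = h \<and> fst (h' ! length h) = c
      then F (snd (h' ! length h), if length h' = Suc (length h) then c'' else fst (h' ! Suc (length h))) (h', c'')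
      else None)"
  have sch: "scheduler sa sb Sch0"
    unfolding scheduler_def
  proof (intro allI impI)
    fix h' c'' d assume d: "Sch0 (h', c'') = Some d"
    show "d \<in> conv {\<nu>. step sa sb c'' \<nu>}"
    proof (cases "h' = h \<and> c'' = c")
      case True
      then have "d = (\<Sum>v\<in>V. P v *\<^sub>R v)" using d unfolding Sch0_def by simp
      moreover have "(\<Sum>v\<in>V. P v *\<^sub>R v) \<in> convex hull {\<nu>. step sa sb c \<nu>}"
        by (rule convex_sum) (use V(1) Py P1 Vstep in \<open>auto intro: hull_inc less_imp_le\<close>)
      ultimately show ?thesis using True by (simp add: conv_eq)
    next
      case False
      show ?thesis
      proof (cases "length h < length h' \<and> take (length h) h' = h \<and> fst (h' ! length h) = c")
        case True
        then have "F (snd (h' ! length h), if length h' = Suc (length h) then c'' else fst (h' ! Suc (length h))) (h', c'') = Some d"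
          using d False unfolding Sch0_def by simp
        with F show ?thesis unfolding scheduler_def by blast
      next
        case False2: False
        then have "Sch0 (h', c'') = None" using False unfolding Sch0_def by auto
        with d show ?thesis by simp
      qed
    qed
  qed
  define m where "m = card V"
  obtain e where e: "bij_betw e {0..<card V} V" using ex_bij_betw_nat_finite[OF V(1)] by blast
  have e': "bij_betw e {..<m} V" using e unfolding m_def by (simp add: lessThan_atLeast0)
  have eV: "e k \<in> V" if k: "k < m" for k using bij_betwE[OF e'] k by blast
  have reidx: "(\<Sum>v\<in>V. g v) = (\<Sum>k<m. g (e k))" for g :: "_ \<Rightarrow> 'z::comm_monoid_add"
    using sum.reindex_bij_betw[OF e', of g] by simp
  have ch: "\<forall>k<m. \<forall>c'. e k (Inr c') \<noteq> 0 \<longrightarrow> bigstep sa sb Sch0 (h @ [(c, e k)], c') n (G (e k) c')"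
  proof (intro allI impI)
    fix k c' assume k: "k < m" and nz: "e k (Inr c') \<noteq> 0"
    have b: "bigstep sa sb (F (e k, c')) (h @ [(c, e k)], c') n (G (e k) c')"
      using spec[OF F, of "(e k, c')"] eV[OF k] nz by simp
    show "bigstep sa sb Sch0 (h @ [(c, e k)], c') n (G (e k) c')"
    proof (rule bigstep_local[OF b])
      show "\<forall>rest c''. (if rest = [] then c'' = snd (h @ [(c, e k)], c') else fst (hd rest) = snd (h @ [(c, e k)], c')) \<longrightarrow>
          Sch0 (fst (h @ [(c, e k)], c') @ rest, c'') = F (e k, c') (fst (h @ [(c, e k)], c') @ rest, c'')"
      proof (intro allI impI, goal_cases)
        case (1 rest c'')
        then show ?case by (cases rest) (simp_all add: Sch0_def nth_append)
      qed
    qed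
  qed
  have Sch0h: "Sch0 (h, c) = Some (\<lambda>x. \<Sum>k<m. P (e k) * e k x)"
  proof -
    have "(\<Sum>v\<in>V. P v *\<^sub>R v) = (\<lambda>x. \<Sum>k<m. P (e k) * e k x)"
      by (simp add: reidx fun_eq_iff sum_fun_apply scaleR_fun_apply)
    then show ?thesis unfolding Sch0_def by simp
  qed
  have mu3: "\<mu> = (\<lambda>t. \<Sum>k<m. P (e k) *
       ((\<Sum>c'\<in>{c'. e k (Inr c') \<noteq> 0}. e k (Inr c') * G (e k) c' t) + e k (Inl t)))"
  proof -
    have "\<mu> = (\<Sum>v\<in>V. P v *\<^sub>R comb v (G v))"
      using mu mu2 G by (metis (no_types, lifting) sum.cong)
    also have "\<dots> = (\<Sum>k<m. P (e k) *\<^sub>R comb (e k) (G (e k)))" by (rule reidx)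
    finally show ?thesis by (simp add: fun_eq_iff sum_fun_apply scaleR_fun_apply comb_def)
  qed
  have "bigstep sa sb Sch0 (h, c) (Suc n) \<mu>"
  proof (rule bigstep.suc[where p="\<lambda>k. P (e k)" and \<nu>=e and m=m and \<mu>s="\<lambda>k. G (e k)"])
    show "Sch0 (h, c) = Some (\<lambda>x. \<Sum>k<m. P (e k) * e k x)" by (rule Sch0h)
    show "\<forall>k<m. 0 \<le> P (e k)" using Py eV by (auto intro: less_imp_le)
    show "(\<Sum>k<m. P (e k)) = 1" using P1 reidx[of P] by simp
    show "\<forall>k<m. step sa sb c (e k)" using Vstep eV by blast
    show "\<forall>k<m. \<forall>c'. e k (Inr c') \<noteq> 0 \<longrightarrow> bigstep sa sb Sch0 (h @ [(c, e k)], c') n (G (e k) c')"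
      by (rule ch)
    show "\<mu> = (\<lambda>t. \<Sum>k<m. P (e k) *
       ((\<Sum>c'\<in>{c'. e k (Inr c') \<noteq> 0}. e k (Inr c') * G (e k) c' t) + e k (Inl t)))" by (rule mu3)
  qed
  with sch show ?case by blast
qed

theorem theorem5:
  fixes sa :: "'a \<Rightarrow> 's \<Rightarrow> 's dist" and sb :: "'b \<Rightarrow> 's \<Rightarrow> bool"
    and P :: "('a, 'b) prog" and s :: 's and n :: nat
  assumes "\<forall>a t. is_dist (sa a t)"
    and "wf_prog P"
  shows "conv (Fn sa sb n (P, s)) =
         {\<mu>. \<exists>Sch. scheduler sa sb Sch \<and> bigstep sa sb Sch ([], (P, s)) n \<mu>}"
  unfolding conv_eq
proof (intro subset_antisym subsetI)
  fix \<mu> assume "\<mu> \<in> convex hull (Fn sa sb n (P, s))"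
  then show "\<mu> \<in> {\<mu>. \<exists>Sch. scheduler sa sb Sch \<and> bigstep sa sb Sch ([], (P, s)) n \<mu>}"
    using forward[of \<mu> sa sb n "(P, s)" "[]"] by blast
next
  fix \<mu> assume "\<mu> \<in> {\<mu>. \<exists>Sch. scheduler sa sb Sch \<and> bigstep sa sb Sch ([], (P, s)) n \<mu>}"
  then obtain Sch where "bigstep sa sb Sch ([], (P, s)) n \<mu>" by blast
  from bigstep_conv[OF this] show "\<mu> \<in> convex hull (Fn sa sb n (P, s))" by simp
qed

end
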